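(* Let $e\ge2$ and let $p^r$, $q^s$ be prime powers with $p^r\equiv 1\pmod e$ and $q^s\equiv1\pmod e$ (the cases $p\ne q$ and $p=q$ are both allowed). Let $\eta_r:\mathbb{Z}/e\mathbb{Z}\to\mathbb{C}$ be the Gaussian periods of degree $e$ for $\mathbb{F}_{p^r}$ (with respect to a fixed generator of $\mathbb{F}_{p^r}^\times$) and $\eta'_s$ those for $\mathbb{F}_{q^s}$ (with respect to a fixed generator of $\mathbb{F}_{q^s}^\times$), and let $C$, $C'$ be the corresponding multiplication matrices. Then for every $d\in(\mathbb{Z}/e\mathbb{Z})\setminus\{0\}$ and all $i,j\in\mathbb{Z}/e\mathbb{Z}$, \[ (\eta_r\overset{d}{\ast}\eta'_s)(i)\,(\eta_r\overset{d}{\ast}\eta'_s)(j)=\sum_{k=0}^{e-1}(C\overset{d}{\ast}C')[j-i,k-i]\,(\eta_r\overset{d}{\ast}\eta'_s)(k). \]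
   Context: For a prime power $Q=\ell^m$ ($\ell$ prime) with $Q\equiv1\pmod e$, write $Q=ef+1$, let $\zeta_\ell=e^{2\pi i/\ell}$, $\mathrm{Tr}:\mathbb{F}_Q\to\mathbb{F}_\ell$ the trace, $\beta$ a generator of $\mathbb{F}_Q^\times$. Gaussian periods: $\eta(i)=\sum_{j=0}^{f-1}\zeta_\ell^{\mathrm{Tr}(\beta^{ej+i})}$. Cyclotomic numbers: $\mathrm{Cyc}(i,j)=\#\{(v_1,v_2):0\le v_1,v_2\le f-1,\ 1+\beta^{ev_1+i}=\beta^{ev_2+j}\}$. Let $D_i=1$ if $-1\in\beta^i(\mathbb{F}_Q^\times)^e$ and $0$ otherwise. The multiplication matrix is $[\mathrm{Cyc}(i,j)-D_if]_{0\le i,j\le e-1}$, with indices modulo $e$ and $M[i,j]$ denoting the $(i,j)$ entry. For functions $f,g$ on $\mathbb{Z}/e\mathbb{Z}$, $(f\overset{d}{\ast}g)(i)=\sum_{s=0}^{e-1}f(s)g(ds+i)$; for matrices, $A\overset{d}{\ast}B=\big[\sum_{s,t=0}^{e-1}a_{s,t}b_{ds+i,dt+j}\big]_{0\le i,j\le e-1}$. *)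

theory Defs
  imports Complex_Main "HOL-Algebra.Algebra"
begin

text \<open>Finite fields are HOL-Algebra fields R with finite carrier of size l^m, l prime.
Indices in Z/eZ are represented by integers, always reduced mod e.\<close>

definition ff_trace :: "('a,'b) ring_scheme \<Rightarrow> nat \<Rightarrow> nat \<Rightarrow> 'a \<Rightarrow> 'a" where
  "ff_trace R l m x = (\<Oplus>\<^bsub>R\<^esub> k \<in> {..<m}. x [^]\<^bsub>R\<^esub> (l ^ k))"

definition tr_nat :: "('a,'b) ring_scheme \<Rightarrow> nat \<Rightarrow> nat \<Rightarrow> 'a \<Rightarrow> nat" where
  "tr_nat R l m x = (THE t. t < l \<and> ff_trace R l m x = [t] \<cdot>\<^bsub>R\<^esub> \<one>\<^bsub>R\<^esub>)"

definition is_generator :: "('a,'b) ring_scheme \<Rightarrow> 'a \<Rightarrow> bool" where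
  "is_generator R \<beta> \<longleftrightarrow> \<beta> \<in> carrier R - {\<zero>\<^bsub>R\<^esub>} \<and>
     (\<forall>x \<in> carrier R - {\<zero>\<^bsub>R\<^esub>}. \<exists>k::nat. x = \<beta> [^]\<^bsub>R\<^esub> k)"

definition gauss_period :: "('a,'b) ring_scheme \<Rightarrow> nat \<Rightarrow> nat \<Rightarrow> nat \<Rightarrow> 'a \<Rightarrow> int \<Rightarrow> complex" where
  "gauss_period R l m e \<beta> i =
     (\<Sum>j < (l ^ m - 1) div e.
        exp (2 * pi * \<i> / of_nat l) ^ tr_nat R l m (\<beta> [^]\<^bsub>R\<^esub> (e * j + nat (i mod int e) :: nat)))"

definition cyc :: "('a,'b) ring_scheme \<Rightarrow> nat \<Rightarrow> nat \<Rightarrow> nat \<Rightarrow> 'a \<Rightarrow> int \<Rightarrow> int \<Rightarrow> nat" where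
  "cyc R l m e \<beta> i j = card {(v1, v2). v1 < (l ^ m - 1) div e \<and> v2 < (l ^ m - 1) div e \<and>
      \<one>\<^bsub>R\<^esub> \<oplus>\<^bsub>R\<^esub> \<beta> [^]\<^bsub>R\<^esub> (e * v1 + nat (i mod int e) :: nat)
        = \<beta> [^]\<^bsub>R\<^esub> (e * v2 + nat (j mod int e) :: nat)}"

definition D_ind :: "('a,'b) ring_scheme \<Rightarrow> nat \<Rightarrow> nat \<Rightarrow> nat \<Rightarrow> 'a \<Rightarrow> int \<Rightarrow> int" where
  "D_ind R l m e \<beta> i = (if \<exists>x \<in> carrier R - {\<zero>\<^bsub>R\<^esub>}.
        \<ominus>\<^bsub>R\<^esub> \<one>\<^bsub>R\<^esub> = \<beta> [^]\<^bsub>R\<^esub> (nat (i mod int e)) \<otimes>\<^bsub>R\<^esub> x [^]\<^bsub>R\<^esub> e then 1 else 0)"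

definition mult_matrix :: "('a,'b) ring_scheme \<Rightarrow> nat \<Rightarrow> nat \<Rightarrow> nat \<Rightarrow> 'a \<Rightarrow> int \<Rightarrow> int \<Rightarrow> int" where
  "mult_matrix R l m e \<beta> i j = int (cyc R l m e \<beta> i j) - D_ind R l m e \<beta> i * int ((l ^ m - 1) div e)"

definition dconv :: "nat \<Rightarrow> int \<Rightarrow> (int \<Rightarrow> complex) \<Rightarrow> (int \<Rightarrow> complex) \<Rightarrow> int \<Rightarrow> complex" where
  "dconv e d F G i = (\<Sum>s \<in> {0..<int e}. F s * G (d * s + i))"

definition dconv_mat :: "nat \<Rightarrow> int \<Rightarrow> (int \<Rightarrow> int \<Rightarrow> int) \<Rightarrow> (int \<Rightarrow> int \<Rightarrow> int) \<Rightarrow> int \<Rightarrow> int \<Rightarrow> int" where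
  "dconv_mat e d A B i j = (\<Sum>s \<in> {0..<int e}. \<Sum>t \<in> {0..<int e}.
      A (s mod int e) (t mod int e) * B ((d * s + i) mod int e) ((d * t + j) mod int e))"

end

theory Submission
  imports Defs "HOL-Computational_Algebra.Primes"
begin

lemma modeqI: "x - y = int e * z \<Longrightarrow> x mod int e = y mod int e"
  by (metis mod_eq_dvd_iff dvd_triv_left)

lemma mod_repr: "a mod int e = a - int e * (a div int e)"
  by (simp add: minus_div_mult_eq_mod[symmetric] mult.commute)

lemma shift_sum:
  fixes g :: "int \<Rightarrow> 'a::comm_monoid_add"
  assumes e: "e > 0" and per: "\<And>x. g (x mod int e) = g x"
  shows "(\<Sum>k\<in>{0..<int e}. g k) = (\<Sum>k\<in>{0..<int e}. g (k + c))"
proof -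
  have bij: "bij_betw (\<lambda>k. (k + c) mod int e) {0..<int e} {0..<int e}"
    by (rule bij_betwI[where g="\<lambda>k. (k - c) mod int e"]) (use e in \<open>auto simp: mod_simps\<close>)
  have "(\<Sum>k\<in>{0..<int e}. g k) = (\<Sum>k\<in>{0..<int e}. g ((k + c) mod int e))"
    using sum.reindex_bij_betw[OF bij, of g] by simp
  also have "\<dots> = (\<Sum>k\<in>{0..<int e}. g (k + c))" by (simp add: per)
  finally show ?thesis .
qed

lemma sum4_reorder:
  "(\<Sum>s\<in>II. \<Sum>t\<in>II. \<Sum>a\<in>II. \<Sum>k\<in>II. FF s t a k) = (\<Sum>k\<in>II. \<Sum>t\<in>II. \<Sum>a\<in>II. \<Sum>s\<in>II. (FF s t a k :: 'z::comm_monoid_add))"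
proof -
  have "(\<Sum>s\<in>II. \<Sum>t\<in>II. \<Sum>a\<in>II. \<Sum>k\<in>II. FF s t a k) = (\<Sum>t\<in>II. \<Sum>s\<in>II. \<Sum>a\<in>II. \<Sum>k\<in>II. FF s t a k)"
    by (rule sum.swap)
  also have "\<dots> = (\<Sum>t\<in>II. \<Sum>a\<in>II. \<Sum>s\<in>II. \<Sum>k\<in>II. FF s t a k)"
    by (rule sum.cong[OF refl], rule sum.swap)
  also have "\<dots> = (\<Sum>t\<in>II. \<Sum>a\<in>II. \<Sum>k\<in>II. \<Sum>s\<in>II. FF s t a k)"
    by (rule sum.cong[OF refl], rule sum.cong[OF refl], rule sum.swap)
  also have "\<dots> = (\<Sum>t\<in>II. \<Sum>k\<in>II. \<Sum>a\<in>II. \<Sum>s\<in>II. FF s t a k)"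
    by (rule sum.cong[OF refl], rule sum.swap)
  also have "\<dots> = (\<Sum>k\<in>II. \<Sum>t\<in>II. \<Sum>a\<in>II. \<Sum>s\<in>II. FF s t a k)"
    by (rule sum.swap)
  finally show ?thesis .
qed

lemma dconv_identity:
  fixes \<eta> \<eta>' :: "int \<Rightarrow> complex" and C C' :: "int \<Rightarrow> int \<Rightarrow> int"
  assumes e: "e > 0"
    and pe: "\<And>x. \<eta> (x mod int e) = \<eta> x" and pe': "\<And>x. \<eta>' (x mod int e) = \<eta>' x"
    and pC: "\<And>x y. C (x mod int e) (y mod int e) = C x y"
    and pC': "\<And>x y. C' (x mod int e) (y mod int e) = C' x y"
    and H1: "\<And>i j. \<eta> i * \<eta> j = (\<Sum>k\<in>{0..<int e}. of_int (C (j - i) (k - i)) * \<eta> k)"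
    and H2: "\<And>i j. \<eta>' i * \<eta>' j = (\<Sum>k\<in>{0..<int e}. of_int (C' (j - i) (k - i)) * \<eta>' k)"
  shows "dconv e d \<eta> \<eta>' i * dconv e d \<eta> \<eta>' j =
    (\<Sum>k\<in>{0..<int e}. of_int (dconv_mat e d C C' (j - i) (k - i)) * dconv e d \<eta> \<eta>' k)"
proof -
  define II where "II = {0..<int e}"
  have gC: "C x y = C x' y'" if "x mod int e = x' mod int e" "y mod int e = y' mod int e" for x y x' y'
    by (metis pC that)
  have gC': "C' x y = C' x' y'" if "x mod int e = x' mod int e" "y mod int e = y' mod int e" for x y x' y'
    by (metis pC' that)
  have ge: "\<eta> x = \<eta> x'" if "x mod int e = x' mod int e" for x x'
    by (metis pe that)
  have ge': "\<eta>' x = \<eta>' x'" if "x mod int e = x' mod int e" for x x'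
    by (metis pe' that)
  have mA: "(d * (x mod int e) + c) mod int e = (d * x + c) mod int e" for x c
    by (rule modeqI[where z="- d * (x div int e)"]) (simp add: mod_repr algebra_simps)
  have cD: "C' XX (x mod int e - YY) = C' XX (x - YY)" for XX x YY
    by (rule gC') (simp_all add: mod_diff_left_eq)
  have cA: "C XX (x mod int e - YY) = C XX (x - YY)" for XX x YY
    by (rule gC) (simp_all add: mod_diff_left_eq)
  have mC: "(k + d * (x mod int e) - YY) mod int e = (k + d * x - YY) mod int e" for k x YY
    by (rule modeqI[where z="- d * (x div int e)"]) (simp add: mod_repr algebra_simps)
  have mD: "(k + d * (x mod int e)) mod int e = (k + d * x) mod int e" for k x
    by (rule modeqI[where z="- d * (x div int e)"]) (simp add: mod_repr algebra_simps)
  have cE: "C' XX (k + d * (x mod int e) - YY) = C' XX (k + d * x - YY)" for XX k x YY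
    by (rule gC'[OF refl mC])
  have eE: "\<eta>' (k + d * (x mod int e)) = \<eta>' (k + d * x)" for k x
    by (rule ge'[OF mD])
  have eqA: "k + d * (a + s) - (d * s + i) = k + d * a - i" for k a s
    by (simp add: algebra_simps)
  have mB: "(x mod int e + c) mod int e = (x + c) mod int e" for x c
    by (simp add: mod_simps)
  have "dconv e d \<eta> \<eta>' i * dconv e d \<eta> \<eta>' j =
     (\<Sum>s\<in>II. \<Sum>t\<in>II. (\<eta> s * \<eta>' (d * s + i)) * (\<eta> t * \<eta>' (d * t + j)))"
    unfolding dconv_def II_def by (rule sum_product)
  also have "\<dots> = (\<Sum>s\<in>II. \<Sum>t\<in>II. (\<eta> s * \<eta>' (d * s + i)) * (\<eta> (t + s) * \<eta>' (d * (t + s) + j)))"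
  proof (rule sum.cong[OF refl])
    fix s
    have sh: "(\<Sum>t\<in>II. \<eta> t * \<eta>' (d * t + j)) = (\<Sum>t\<in>II. \<eta> (t + s) * \<eta>' (d * (t + s) + j))"
      unfolding II_def
      by (rule shift_sum[OF e, where g="\<lambda>t. \<eta> t * \<eta>' (d * t + j)"])
         (simp add: pe ge'[OF mA])
    then show "(\<Sum>t\<in>II. (\<eta> s * \<eta>' (d * s + i)) * (\<eta> t * \<eta>' (d * t + j))) =
      (\<Sum>t\<in>II. (\<eta> s * \<eta>' (d * s + i)) * (\<eta> (t + s) * \<eta>' (d * (t + s) + j)))"
      by (simp only: sum_distrib_left[symmetric] sh)
  qed
  also have "\<dots> = (\<Sum>s\<in>II. \<Sum>t\<in>II. (\<eta> s * \<eta> (t + s)) * (\<eta>' (d * s + i) * \<eta>' (d * (t + s) + j)))"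
    by (simp add: ac_simps)
  also have "\<dots> = (\<Sum>s\<in>II. \<Sum>t\<in>II. (\<Sum>a\<in>II. of_int (C t (a - s)) * \<eta> a) *
        (\<Sum>b\<in>II. of_int (C' (d * t + j - i) (b - (d * s + i))) * \<eta>' b))"
  proof (intro sum.cong refl)
    fix s t
    have 1: "\<eta> s * \<eta> (t + s) = (\<Sum>a\<in>II. of_int (C t (a - s)) * \<eta> a)"
      using H1[of s "t + s"] by (simp add: II_def)
    have 2: "\<eta>' (d * s + i) * \<eta>' (d * (t + s) + j) = (\<Sum>b\<in>II. of_int (C' (d * t + j - i) (b - (d * s + i))) * \<eta>' b)"
      using H2[of "d * s + i" "d * (t + s) + j"] by (simp add: II_def algebra_simps)
    show "(\<eta> s * \<eta> (t + s)) * (\<eta>' (d * s + i) * \<eta>' (d * (t + s) + j)) =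
      (\<Sum>a\<in>II. of_int (C t (a - s)) * \<eta> a) * (\<Sum>b\<in>II. of_int (C' (d * t + j - i) (b - (d * s + i))) * \<eta>' b)"
      by (simp only: 1 2)
  qed
  also have "\<dots> = (\<Sum>s\<in>II. \<Sum>t\<in>II. \<Sum>a\<in>II. \<Sum>b\<in>II. (of_int (C t (a - s)) * \<eta> a) *
        (of_int (C' (d * t + j - i) (b - (d * s + i))) * \<eta>' b))"
    by (simp only: sum_product)
  also have "\<dots> = (\<Sum>s\<in>II. \<Sum>t\<in>II. \<Sum>a\<in>II. \<Sum>k\<in>II. (of_int (C t (a - s)) * \<eta> a) *
        (of_int (C' (d * t + j - i) (k + d * a - (d * s + i))) * \<eta>' (k + d * a)))"
  proof (rule sum.cong[OF refl], rule sum.cong[OF refl], rule sum.cong[OF refl])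
    fix s t a
    show "(\<Sum>b\<in>II. (of_int (C t (a - s)) * \<eta> a) * (of_int (C' (d * t + j - i) (b - (d * s + i))) * \<eta>' b)) =
      (\<Sum>k\<in>II. (of_int (C t (a - s)) * \<eta> a) * (of_int (C' (d * t + j - i) (k + d * a - (d * s + i))) * \<eta>' (k + d * a)))"
      unfolding II_def
      by (rule shift_sum[OF e, where g="\<lambda>b. (of_int (C t (a - s)) * \<eta> a) * (of_int (C' (d * t + j - i) (b - (d * s + i))) * \<eta>' b)"])
        (simp add: pe' cD)
  qed
  also have "\<dots> = (\<Sum>s\<in>II. \<Sum>t\<in>II. \<Sum>a\<in>II. \<Sum>k\<in>II. (of_int (C t a) * \<eta> (a + s)) *
        (of_int (C' (d * t + j - i) (k + d * a - i)) * \<eta>' (k + d * (a + s))))"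
  proof (rule sum.cong[OF refl], rule sum.cong[OF refl])
    fix s t
    have "(\<Sum>a\<in>II. \<Sum>k\<in>II. (of_int (C t (a - s)) * \<eta> a) *
        (of_int (C' (d * t + j - i) (k + d * a - (d * s + i))) * \<eta>' (k + d * a))) =
      (\<Sum>a\<in>II. \<Sum>k\<in>II. (of_int (C t ((a + s) - s)) * \<eta> (a + s)) *
        (of_int (C' (d * t + j - i) (k + d * (a + s) - (d * s + i))) * \<eta>' (k + d * (a + s))))"
      unfolding II_def
      by (rule shift_sum[OF e, where g="\<lambda>a. \<Sum>k\<in>{0..<int e}. (of_int (C t (a - s)) * \<eta> a) *
        (of_int (C' (d * t + j - i) (k + d * a - (d * s + i))) * \<eta>' (k + d * a))"])
        (simp add: pe cA cE eE)
    then show "(\<Sum>a\<in>II. \<Sum>k\<in>II. (of_int (C t (a - s)) * \<eta> a) *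
        (of_int (C' (d * t + j - i) (k + d * a - (d * s + i))) * \<eta>' (k + d * a))) =
      (\<Sum>a\<in>II. \<Sum>k\<in>II. (of_int (C t a) * \<eta> (a + s)) *
        (of_int (C' (d * t + j - i) (k + d * a - i)) * \<eta>' (k + d * (a + s))))"
      by (simp only: eqA add_diff_cancel_right')
  qed
  also have "\<dots> = (\<Sum>k\<in>II. \<Sum>t\<in>II. \<Sum>a\<in>II. \<Sum>s\<in>II. (of_int (C t a) * \<eta> (a + s)) *
        (of_int (C' (d * t + j - i) (k + d * a - i)) * \<eta>' (k + d * (a + s))))"
    by (rule sum4_reorder)
  also have "\<dots> = (\<Sum>k\<in>II. \<Sum>t\<in>II. \<Sum>a\<in>II. of_int (C t a * C' (d * t + (j - i)) (d * a + (k - i))) *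
        (\<Sum>s\<in>II. \<eta> s * \<eta>' (d * s + k)))"
  proof (intro sum.cong refl)
    fix k t a
    have "(\<Sum>s\<in>II. \<eta> s * \<eta>' (d * s + k)) = (\<Sum>s\<in>II. \<eta> (s + a) * \<eta>' (d * (s + a) + k))"
      unfolding II_def
      by (rule shift_sum[OF e, where g="\<lambda>s. \<eta> s * \<eta>' (d * s + k)"])
         (simp add: pe ge'[OF mA])
    then show "(\<Sum>s\<in>II. (of_int (C t a) * \<eta> (a + s)) *
        (of_int (C' (d * t + j - i) (k + d * a - i)) * \<eta>' (k + d * (a + s)))) =
      of_int (C t a * C' (d * t + (j - i)) (d * a + (k - i))) * (\<Sum>s\<in>II. \<eta> s * \<eta>' (d * s + k))"
      by (simp add: sum_distrib_left algebra_simps)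
  qed
  also have "\<dots> = (\<Sum>k\<in>II. of_int (dconv_mat e d C C' (j - i) (k - i)) * dconv e d \<eta> \<eta>' k)"
  proof (intro sum.cong refl)
    fix k
    have "dconv_mat e d C C' (j - i) (k - i) = (\<Sum>t\<in>II. \<Sum>a\<in>II. C t a * C' (d * t + (j - i)) (d * a + (k - i)))"
      unfolding dconv_mat_def II_def
      by (intro sum.cong refl) (simp add: pC')
    then show "(\<Sum>t\<in>II. \<Sum>a\<in>II. of_int (C t a * C' (d * t + (j - i)) (d * a + (k - i))) *
        (\<Sum>s\<in>II. \<eta> s * \<eta>' (d * s + k))) = of_int (dconv_mat e d C C' (j - i) (k - i)) * dconv e d \<eta> \<eta>' k"
      by (simp add: dconv_def II_def sum_distrib_right)
  qed
  finally show ?thesis by (simp add: II_def)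
qed

locale ffield = field R for R (structure) +
  fixes p r :: nat
  assumes fin: "finite (carrier R)" and pp: "Factorial_Ring.prime p" and r1: "r \<ge> 1"
    and cardR: "card (carrier R) = p ^ r"
begin

lemma add_pow_one_mult: "(add_pow R ((m::nat) * n) \<one>) = (add_pow R (m) \<one>) \<otimes> (add_pow R (n) \<one>)"
proof -
  have "(add_pow R (m) \<one>) \<otimes> (add_pow R (n) \<one>) = (add_pow R (m) (\<one> \<otimes> (add_pow R (n) \<one>)))"
    by (simp add: add_pow_ldistr)
  also have "\<dots> = (add_pow R (m) ((add_pow R (n) \<one>)))" by simp
  also have "\<dots> = (add_pow R (m * n) \<one>)" 
    by (simp add: add.nat_pow_pow mult.commute)
  finally show ?thesis by simp
qed

lemma add_pow_one_power: "(add_pow R ((m::nat) ^ k) \<one>) = ((add_pow R (m) \<one>)) [^] (k::nat)"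
  by (induction k) (simp_all add: add_pow_one_mult m_comm)

lemma pow_eq_zero_D: "x \<in> carrier R \<Longrightarrow> x [^] (k::nat) = \<zero> \<Longrightarrow> x = \<zero>"
proof (induction k)
  case 0 then show ?case by simp
next
  case (Suc k) then show ?case by (auto simp: integral_iff)
qed

lemma card_one: "(add_pow R (p ^ r) \<one>) = \<zero>"
proof -
  have "(add_pow R (order (add_monoid R)) \<one>) = \<zero>"
    using add.pow_order_eq_1[of \<one>] fin by (simp add: order_def)
  then show ?thesis by (simp add: order_def cardR)
qed

lemma char_p: "(add_pow R (p) \<one>) = \<zero>"
proof -
  have "((add_pow R (p) \<one>)) [^] r = \<zero>" using card_one add_pow_one_power by simp
  then show ?thesis using r1
    using pow_eq_zero_D[of "add_pow R p \<one>" r] by simp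
qed

lemma binomial_R:
  assumes x: "x \<in> carrier R" and y: "y \<in> carrier R"
  shows "(x \<oplus> y) [^] (n::nat) = (\<Oplus>k\<in>{..n}. add_pow R (n choose k) (x [^] k \<otimes> y [^] (n - k)))"
proof (induction n)
  case 0 then show ?case using x y by simp
next
  case (Suc n)
  define A where "A k = add_pow R (n choose k) (x [^] Suc k \<otimes> y [^] (n - k))" for k
  define B where "B k = add_pow R (n choose k) (x [^] k \<otimes> y [^] (Suc n - k))" for k
  have AB: "A \<in> UNIV \<rightarrow> carrier R" "B \<in> UNIV \<rightarrow> carrier R" using x y by (auto simp: A_def B_def)
  have "(x \<oplus> y) [^] Suc n = (x \<oplus> y) [^] n \<otimes> x \<oplus> (x \<oplus> y) [^] n \<otimes> y"
    using x y by (simp add: r_distr)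
  also have "(x \<oplus> y) [^] n \<otimes> x = (\<Oplus>k\<in>{..n}. A k)"
  proof -
    have "(x \<oplus> y) [^] n \<otimes> x = (\<Oplus>k\<in>{..n}. add_pow R (n choose k) (x [^] k \<otimes> y [^] (n - k))) \<otimes> x"
      by (simp only: Suc)
    also have "\<dots> = (\<Oplus>k\<in>{..n}. add_pow R (n choose k) (x [^] k \<otimes> y [^] (n - k)) \<otimes> x)"
      using x y by (intro finsum_ldistr) auto
    also have "\<dots> = (\<Oplus>k\<in>{..n}. A k)"
      using x y by (intro finsum_cong') (auto simp: A_def add_pow_ldistr add_pow_rdistr m_ac)
    finally show ?thesis .
  qed
  also have "(x \<oplus> y) [^] n \<otimes> y = (\<Oplus>k\<in>{..n}. B k)"
  proof -
    have "(x \<oplus> y) [^] n \<otimes> y = (\<Oplus>k\<in>{..n}. add_pow R (n choose k) (x [^] k \<otimes> y [^] (n - k))) \<otimes> y"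
      by (simp only: Suc)
    also have "\<dots> = (\<Oplus>k\<in>{..n}. add_pow R (n choose k) (x [^] k \<otimes> y [^] (n - k)) \<otimes> y)"
      using x y by (intro finsum_ldistr) auto
    also have "\<dots> = (\<Oplus>k\<in>{..n}. B k)"
      using x y by (intro finsum_cong') (auto simp: B_def add_pow_ldistr add_pow_rdistr m_ac Suc_diff_le)
    finally show ?thesis .
  qed
  also have "(\<Oplus>k\<in>{..n}. B k) = (\<Oplus>k\<in>{..Suc n}. B k)"
  proof -
    have B0: "B (Suc n) = \<zero>" by (simp add: B_def binomial_eq_0)
    have "B \<in> {..Suc n} \<rightarrow> carrier R" "B \<in> {..n} \<rightarrow> carrier R" using AB by auto
    then show ?thesis using finsum_Suc[of B n] by (simp add: B0 finsum_closed)
  qed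
  also have "\<dots> = (\<Oplus>k\<in>{..n}. B (Suc k)) \<oplus> B 0"
    by (rule finsum_Suc2) (use AB in auto)
  finally have "(x \<oplus> y) [^] Suc n = (\<Oplus>k\<in>{..n}. A k) \<oplus> ((\<Oplus>k\<in>{..n}. B (Suc k)) \<oplus> B 0)" .
  also have "\<dots> = (\<Oplus>k\<in>{..n}. A k \<oplus> B (Suc k)) \<oplus> B 0"
  proof -
    have c1: "A \<in> {..n} \<rightarrow> carrier R" "(\<lambda>k. B (Suc k)) \<in> {..n} \<rightarrow> carrier R" "B 0 \<in> carrier R" using AB by auto
    have "(\<Oplus>k\<in>{..n}. A k \<oplus> B (Suc k)) = (\<Oplus>k\<in>{..n}. A k) \<oplus> (\<Oplus>k\<in>{..n}. B (Suc k))"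
      by (rule finsum_addf[OF c1(1,2)])
    then show ?thesis using c1 by (simp only: a_assoc finsum_closed)
  qed
  also have "\<dots> = (\<Oplus>k\<in>{..Suc n}. add_pow R (Suc n choose k) (x [^] k \<otimes> y [^] (Suc n - k)))"
  proof -
    have "(\<Oplus>k\<in>{..Suc n}. add_pow R (Suc n choose k) (x [^] k \<otimes> y [^] (Suc n - k)))
       = (\<Oplus>k\<in>{..n}. add_pow R (Suc n choose Suc k) (x [^] Suc k \<otimes> y [^] (Suc n - Suc k)))
         \<oplus> add_pow R (Suc n choose 0) (x [^] (0::nat) \<otimes> y [^] (Suc n - 0))"
      by (rule finsum_Suc2) (use x y in auto)
    also have "(\<Oplus>k\<in>{..n}. add_pow R (Suc n choose Suc k) (x [^] Suc k \<otimes> y [^] (Suc n - Suc k)))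
       = (\<Oplus>k\<in>{..n}. A k \<oplus> B (Suc k))"
      using x y by (intro finsum_cong') (auto simp: A_def B_def add.nat_pow_mult)
    finally show ?thesis by (simp add: B_def)
  qed
  finally show ?case .
qed

lemma p2: "p \<ge> 2" using pp by (simp add: prime_ge_2_nat)

lemma add_pow_p: "z \<in> carrier R \<Longrightarrow> add_pow R p z = \<zero>"
  using add_pow_ldistr[of \<one> z p] char_p by simp

lemma add_pow_dvd_p: "p dvd m \<Longrightarrow> z \<in> carrier R \<Longrightarrow> add_pow R m z = \<zero>"
proof -
  assume "p dvd m" "z \<in> carrier R"
  then obtain q where "m = p * q" by (auto elim: dvdE)
  then have "add_pow R m z = add_pow R q (add_pow R p z)"
    using \<open>z \<in> carrier R\<close> by (simp add: add.nat_pow_pow)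
  then show ?thesis using add_pow_p \<open>z \<in> carrier R\<close> by simp
qed

lemma frob:
  assumes x: "x \<in> carrier R" and y: "y \<in> carrier R"
  shows "(x \<oplus> y) [^] p = x [^] p \<oplus> y [^] p"
proof -
  obtain m where m: "p = Suc (Suc m)" using p2 by (metis add_2_eq_Suc le_Suc_ex)
  define f where "f k = add_pow R (p choose k) (x [^] k \<otimes> y [^] (p - k))" for k
  have fc: "f \<in> UNIV \<rightarrow> carrier R" using x y by (auto simp: f_def)
  have "(x \<oplus> y) [^] p = (\<Oplus>k\<in>{..Suc (Suc m)}. f k)"
    unfolding f_def using binomial_R[OF x y, of p] m by simp
  also have "\<dots> = f (Suc (Suc m)) \<oplus> (\<Oplus>k\<in>{..Suc m}. f k)"
    by (rule finsum_Suc) (use fc in auto)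
  also have "(\<Oplus>k\<in>{..Suc m}. f k) = (\<Oplus>k\<in>{..m}. f (Suc k)) \<oplus> f 0"
    by (rule finsum_Suc2) (use fc in auto)
  also have "(\<Oplus>k\<in>{..m}. f (Suc k)) = (\<Oplus>k\<in>{..m}. \<zero>)"
  proof (intro finsum_cong')
    fix k assume "k \<in> {..m}"
    then have "p dvd (p choose Suc k)" using m pp by (intro dvd_choose_prime) auto
    then show "f (Suc k) = \<zero>" unfolding f_def using x y by (intro add_pow_dvd_p) auto
  qed auto
  finally show ?thesis using x y m by (simp add: f_def a_comm)
qed

lemma frob_pow:
  assumes x: "x \<in> carrier R" and y: "y \<in> carrier R"
  shows "(x \<oplus> y) [^] (p ^ k) = x [^] (p ^ k) \<oplus> y [^] (p ^ k)"
proof (induction k)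
  case 0 then show ?case using x y by simp
next
  case (Suc k)
  have "(x \<oplus> y) [^] (p ^ Suc k) = ((x \<oplus> y) [^] (p ^ k)) [^] p"
    using x y by (simp add: nat_pow_pow mult.commute)
  also have "\<dots> = (x [^] (p ^ k)) [^] p \<oplus> (y [^] (p ^ k)) [^] p"
    using Suc x y by (simp add: frob)
  also have "\<dots> = x [^] (p ^ Suc k) \<oplus> y [^] (p ^ Suc k)"
    using x y by (simp add: nat_pow_pow mult.commute)
  finally show ?case .
qed

lemma frob_sum:
  assumes "finite A" "f \<in> A \<rightarrow> carrier R"
  shows "(\<Oplus>i\<in>A. f i) [^] (p ^ k) = (\<Oplus>i\<in>A. f i [^] (p ^ k))"
  using assms
proof (induction A rule: finite_induct)
  case empty
  have "p ^ k \<noteq> 0" using p2 by simp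
  then show ?case by (simp add: nat_pow_zero)
next
  case (insert a A)
  then have fa: "f a \<in> carrier R" and fA: "f \<in> A \<rightarrow> carrier R" by auto
  then have "(\<Oplus>i\<in>insert a A. f i) = f a \<oplus> (\<Oplus>i\<in>A. f i)"
    using insert by (simp add: finsum_insert)
  moreover have "(\<Oplus>i\<in>insert a A. f i [^] (p ^ k)) = f a [^] (p ^ k) \<oplus> (\<Oplus>i\<in>A. f i [^] (p ^ k))"
    using insert fa fA by (intro finsum_insert) auto
  ultimately show ?case using insert fa fA by (simp add: frob_pow finsum_closed)
qed

lemma pow_card: "x \<in> carrier R \<Longrightarrow> x [^] (p ^ r) = x"
proof -
  assume x: "x \<in> carrier R"
  show ?thesis
  proof (cases "x = \<zero>")
    case True
    have "p ^ r \<noteq> 0" using p2 by simp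
    then show ?thesis using True by (simp add: nat_pow_zero)
  next
    case False
    interpret M: group "Multiplicative_Group.mult_of R" by (rule field_mult_group)
    have "x \<in> carrier (Multiplicative_Group.mult_of R)" using x False by (simp add: Multiplicative_Group.carrier_mult_of)
    then have "x [^]\<^bsub>Multiplicative_Group.mult_of R\<^esub> order (Multiplicative_Group.mult_of R) = \<one>\<^bsub>Multiplicative_Group.mult_of R\<^esub>"
      using M.pow_order_eq_1 finite_mult_of[OF fin] by blast
    then have "x [^] (p ^ r - 1) = \<one>"
      using order_mult_of[OF fin] cardR by (simp add: order_def Multiplicative_Group.nat_pow_mult_of)
    moreover have "p ^ r = Suc (p ^ r - 1)" using p2 by simp
    ultimately show ?thesis using x by (metis nat_pow_Suc l_one)
  qed
qed

abbreviation Tr where "Tr x \<equiv> ff_trace R p r x"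

lemma Tr_closed: "x \<in> carrier R \<Longrightarrow> Tr x \<in> carrier R"
  unfolding ff_trace_def by (intro finsum_closed) auto

lemma Tr_add: "x \<in> carrier R \<Longrightarrow> y \<in> carrier R \<Longrightarrow> Tr (x \<oplus> y) = Tr x \<oplus> Tr y"
proof -
  assume x: "x \<in> carrier R" and y: "y \<in> carrier R"
  have "Tr (x \<oplus> y) = (\<Oplus>k\<in>{..<r}. x [^] (p ^ k) \<oplus> y [^] (p ^ k))"
    unfolding ff_trace_def using x y by (intro finsum_cong') (auto simp: frob_pow)
  also have "\<dots> = Tr x \<oplus> Tr y"
    unfolding ff_trace_def using x y by (intro finsum_addf) auto
  finally show ?thesis .
qed

lemma Tr_zero: "Tr \<zero> = \<zero>"
proof -
  have "\<And>k. p ^ k \<noteq> 0" using p2 by simp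
  then show ?thesis unfolding ff_trace_def by (simp add: nat_pow_zero)
qed

lemma Tr_pow: "x \<in> carrier R \<Longrightarrow> Tr x [^] p = Tr x"
proof -
  assume x: "x \<in> carrier R"
  obtain r' where r': "r = Suc r'" using r1 by (cases r) auto
  define g where "g k = x [^] (p ^ k)" for k
  have gc: "g \<in> UNIV \<rightarrow> carrier R" using x by (auto simp: g_def)
  have "Tr x [^] p = Tr x [^] (p ^ 1)" by simp
  also have "\<dots> = (\<Oplus>k\<in>{..<r}. g k [^] (p ^ 1))"
    unfolding ff_trace_def g_def using x by (intro frob_sum) auto
  also have "\<dots> = (\<Oplus>k\<in>{..r'}. g (Suc k))"
    using x r' by (intro finsum_cong') (auto simp: g_def nat_pow_pow mult.commute lessThan_Suc_atMost)
  finally have 1: "Tr x [^] p = (\<Oplus>k\<in>{..r'}. g (Suc k))" .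
  have "(\<Oplus>k\<in>{..r'}. g (Suc k)) \<oplus> g 0 = (\<Oplus>k\<in>{..Suc r'}. g k)"
    by (rule finsum_Suc2[symmetric]) (use gc in auto)
  also have "\<dots> = g (Suc r') \<oplus> (\<Oplus>k\<in>{..r'}. g k)"
    by (rule finsum_Suc) (use gc in auto)
  also have "g (Suc r') = g 0" using pow_card[OF x] r' x by (simp add: g_def)
  finally have 2: "(\<Oplus>k\<in>{..r'}. g (Suc k)) \<oplus> g 0 = (\<Oplus>k\<in>{..r'}. g k) \<oplus> g 0"
    using gc by (simp add: a_comm finsum_closed Pi_def)
  have 3: "(\<Oplus>k\<in>{..r'}. g (Suc k)) = (\<Oplus>k\<in>{..r'}. g k)"
    using add.right_cancel[of "g 0" "(\<Oplus>k\<in>{..r'}. g (Suc k))" "(\<Oplus>k\<in>{..r'}. g k)"] 2 gc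
    by (simp add: finsum_closed Pi_def)
  have "Tr x = (\<Oplus>k\<in>{..r'}. g k)"
    unfolding ff_trace_def g_def r' lessThan_Suc_atMost ..
  then show ?thesis using 1 3 by simp
qed

lemma one_pow_inj: "inj_on (\<lambda>t. add_pow R t \<one>) {..<p}"
proof (rule ccontr)
  assume "\<not> ?thesis"
  then obtain a b where ab: "a < p" "b < p" "a < b" "add_pow R a \<one> = add_pow R b \<one>"
    unfolding inj_on_def by (metis lessThan_iff linorder_neqE_nat)
  define c where "c = b - a"
  have c: "0 < c" "c < p" using ab by (auto simp: c_def)
  have "add_pow R b \<one> = add_pow R a \<one> \<oplus> add_pow R c \<one>"
    using ab(3) by (simp add: c_def add.nat_pow_mult)
  then have c0: "add_pow R c \<one> = \<zero>" using ab(4)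
    by (metis add.l_cancel_one' add.nat_pow_closed one_closed)
  have "coprime c p" using c pp
    by (metis coprime_commute nat_dvd_not_less prime_imp_coprime)
  then have "gcd c p = 1" by simp
  then obtain u v where uv: "c * u = p * v + 1" using bezout_nat[of c p] c by auto
  have "add_pow R (c * u) \<one> = \<zero>"
    using c0 by (simp add: add.nat_pow_pow[symmetric])
  moreover have "add_pow R (p * v + 1) \<one> = \<one>"
    using add_pow_dvd_p[of "p * v" \<one>] by (simp add: add.nat_pow_mult[symmetric])
  ultimately show False using uv by simp
qed

definition Fp where "Fp = (\<lambda>t. add_pow R t \<one>) ` {..<p}"

lemma card_Fp: "card Fp = p"
  unfolding Fp_def using card_image[OF one_pow_inj] by simp

lemma Fp_pow: "t < p \<Longrightarrow> (add_pow R t \<one>) [^] p = add_pow R t \<one>"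
proof (induction t)
  case 0 then show ?case using p2 by (simp add: nat_pow_zero)
next
  case (Suc t)
  have "add_pow R (Suc t) \<one> = add_pow R t \<one> \<oplus> \<one>" by (simp add: add.nat_pow_Suc)
  then show ?case using Suc by (simp add: frob)
qed

lemma roots_p: "{y \<in> carrier R. y [^] p = y} = Fp"
proof -
  have sub: "Fp \<subseteq> {y \<in> carrier R. y [^] p = y}"
    unfolding Fp_def using Fp_pow by auto
  have "{y \<in> carrier R. y [^] p = y} \<subseteq> insert \<zero> {y \<in> carrier R. y [^] (p - 1) = \<one>}"
  proof
    fix y assume y: "y \<in> {y \<in> carrier R. y [^] p = y}"
    show "y \<in> insert \<zero> {y \<in> carrier R. y [^] (p - 1) = \<one>}"
    proof (cases "y = \<zero>")
      case False
      have "p = Suc (p - 1)" using p2 by simp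
      then have "y [^] (p - 1) \<otimes> y = \<one> \<otimes> y" using y by (metis (mono_tags, lifting) mem_Collect_eq nat_pow_Suc l_one)
      then have "y [^] (p - 1) = \<one>" using y False
        by (metis (no_types, lifting) DiffI field_Units m_rcancel mem_Collect_eq nat_pow_closed one_closed singletonD Units_closed)
      then show ?thesis using y by auto
    qed simp
  qed
  moreover have "card {y \<in> carrier R. y [^] (p - 1) = \<one>} \<le> p - 1"
    using num_roots_le_deg[OF fin, of "p - 1"] p2 by simp
  moreover have "finite {y \<in> carrier R. y [^] (p - 1) = \<one>}" using fin by simp
  ultimately have "card {y \<in> carrier R. y [^] p = y} \<le> p"
  proof -
    assume s: "{y \<in> carrier R. y [^] p = y} \<subseteq> insert \<zero> {y \<in> carrier R. y [^] (p - 1) = \<one>}"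
      and c: "card {y \<in> carrier R. y [^] (p - 1) = \<one>} \<le> p - 1"
      and f: "finite {y \<in> carrier R. y [^] (p - 1) = \<one>}"
    have "card {y \<in> carrier R. y [^] p = y} \<le> card (insert \<zero> {y \<in> carrier R. y [^] (p - 1) = \<one>})"
      using s f by (intro card_mono) auto
    also have "\<dots> \<le> Suc (card {y \<in> carrier R. y [^] (p - 1) = \<one>})"
      using f by (simp add: card_insert_if)
    finally show ?thesis using c p2 by linarith
  qed
  moreover have "finite {y \<in> carrier R. y [^] p = y}" using fin by simp
  ultimately show ?thesis using sub card_Fp
    by (intro card_seteq[symmetric]) auto
qed

lemma Tr_in_Fp: "x \<in> carrier R \<Longrightarrow> \<exists>t<p. Tr x = add_pow R t \<one>"
  using roots_p Tr_pow Tr_closed unfolding Fp_def by blast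

lemma tr_nat_spec: "x \<in> carrier R \<Longrightarrow> tr_nat R p r x < p \<and> Tr x = add_pow R (tr_nat R p r x) \<one>"
  unfolding tr_nat_def
proof (rule theI')
  assume x: "x \<in> carrier R"
  show "\<exists>!t. t < p \<and> Tr x = add_pow R t \<one>"
    using Tr_in_Fp[OF x] one_pow_inj unfolding inj_on_def by auto
qed

lemma tr_nat_eq: "x \<in> carrier R \<Longrightarrow> t < p \<Longrightarrow> Tr x = add_pow R t \<one> \<Longrightarrow> tr_nat R p r x = t"
  using tr_nat_spec[of x] one_pow_inj unfolding inj_on_def by auto

lemma add_pow_mod: "add_pow R n \<one> = add_pow R (n mod p) \<one>"
proof -
  have "add_pow R n \<one> = add_pow R (p * (n div p)) \<one> \<oplus> add_pow R (n mod p) \<one>"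
    by (simp add: add.nat_pow_mult)
  then show ?thesis using add_pow_dvd_p[of "p * (n div p)" \<one>] by simp
qed

lemma tr_nat_add: "x \<in> carrier R \<Longrightarrow> y \<in> carrier R \<Longrightarrow>
   tr_nat R p r (x \<oplus> y) = (tr_nat R p r x + tr_nat R p r y) mod p"
proof -
  assume x: "x \<in> carrier R" and y: "y \<in> carrier R"
  have "Tr (x \<oplus> y) = add_pow R (tr_nat R p r x) \<one> \<oplus> add_pow R (tr_nat R p r y) \<one>"
    using Tr_add[OF x y] tr_nat_spec[OF x] tr_nat_spec[OF y] by simp
  also have "\<dots> = add_pow R ((tr_nat R p r x + tr_nat R p r y) mod p) \<one>"
    by (simp add: add.nat_pow_mult add_pow_mod[symmetric])
  finally show ?thesis using x y p2 by (intro tr_nat_eq) auto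
qed

lemma tr_nat_zero: "tr_nat R p r \<zero> = 0"
  using p2 by (intro tr_nat_eq) (auto simp: Tr_zero)

lemma Tr_nontrivial: "\<exists>a\<in>carrier R. Tr a \<noteq> \<zero>"
proof (rule ccontr)
  assume H: "\<not> ?thesis"
  interpret U: UP_domain R "UP R" by unfold_locales
  have poly: "\<exists>f\<in>carrier (UP R). deg R f = p ^ k \<and>
     (\<forall>x\<in>carrier R. UnivPoly.eval R R id x f = (\<Oplus>j\<in>{..<Suc k}. x [^] (p ^ j)))" for k
  proof (induction k)
    case 0
    have "UnivPoly.eval R R id x (UnivPoly.monom (UP R) \<one> 1) = (\<Oplus>j\<in>{..<Suc 0}. x [^] (p ^ j))"
      if x: "x \<in> carrier R" for x
    proof -
      have "UnivPoly.eval R R id x (UnivPoly.monom (UP R) \<one> 1) = \<one> \<otimes> x [^] (1::nat)"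
        by (rule U.evalRR_monom) (use x in auto)
      moreover have "(\<Oplus>j\<in>{..<Suc 0}. x [^] (p ^ j)) = x"
        using x by (simp add: lessThan_Suc finsum_insert)
      ultimately show ?thesis using x by simp
    qed
    then have "\<forall>x\<in>carrier R. UnivPoly.eval R R id x (UnivPoly.monom (UP R) \<one> 1) = (\<Oplus>j\<in>{..<Suc 0}. x [^] (p ^ j))"
      by blast
    moreover have "deg R (UnivPoly.monom (UP R) \<one> 1) = p ^ 0" by simp
    moreover have "UnivPoly.monom (UP R) \<one> 1 \<in> carrier (UP R)" by simp
    ultimately show ?case by blast
  next
    case (Suc k)
    then obtain f where f: "f \<in> carrier (UP R)" "deg R f = p ^ k"
      "\<forall>x\<in>carrier R. UnivPoly.eval R R id x f = (\<Oplus>j\<in>{..<Suc k}. x [^] (p ^ j))" by blast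
    define g where "g = f \<oplus>\<^bsub>UP R\<^esub> UnivPoly.monom (UP R) \<one> (p ^ Suc k)"
    have mc: "UnivPoly.monom (UP R) \<one> (p ^ Suc k) \<in> carrier (UP R)" by simp
    have dm: "deg R (UnivPoly.monom (UP R) \<one> (p ^ Suc k)) = p ^ Suc k" by simp
    have ne: "p ^ Suc k \<noteq> p ^ k" using p2 by simp
    have "deg R g = max (p ^ k) (p ^ Suc k)"
      unfolding g_def using U.deg_add_eq[OF f(1) mc] dm f(2) ne by simp
    also have "\<dots> = p ^ Suc k" using p2 by simp
    finally have dg: "deg R g = p ^ Suc k" .
    have ev: "UnivPoly.eval R R id x g = (\<Oplus>j\<in>{..<Suc (Suc k)}. x [^] (p ^ j))" if x: "x \<in> carrier R" for x
    proof -
      have "UnivPoly.eval R R id x g = (\<Oplus>j\<in>{..<Suc k}. x [^] (p ^ j)) \<oplus> x [^] (p ^ Suc k)"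
        unfolding g_def using f x U.evalRR_add[OF f(1) mc x] U.evalRR_monom[of \<one> x "p ^ Suc k"] by simp
      also have "\<dots> = (\<Oplus>j\<in>{..<Suc (Suc k)}. x [^] (p ^ j))"
        using x by (simp add: lessThan_Suc finsum_insert a_comm finsum_closed Pi_def)
      finally show ?thesis .
    qed
    have "g \<in> carrier (UP R)" unfolding g_def using f(1) mc by simp
    then show ?case using dg ev by blast
  qed
  obtain r' where r': "r = Suc r'" using r1 by (cases r) auto
  obtain f where f: "f \<in> carrier (UP R)" "deg R f = p ^ r'"
      "\<forall>x\<in>carrier R. UnivPoly.eval R R id x f = (\<Oplus>j\<in>{..<Suc r'}. x [^] (p ^ j))"
    using poly[of r'] by blast
  have fnz: "f \<noteq> \<zero>\<^bsub>UP R\<^esub>" using f(2) p2 U.deg_nzero_nzero by simp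
  have "{a \<in> carrier R. UnivPoly.eval R R id a f = \<zero>} = carrier R"
    using H f(3) r' unfolding ff_trace_def by auto
  then have "card (carrier R) \<le> p ^ r'"
    using U.roots_bound[OF f(1) fnz fin] f(2) by simp
  moreover have "p ^ r' < p ^ r" using p2 r' by simp
  ultimately show False using cardR by simp
qed

definition zeta :: complex where "zeta = exp (2 * pi * \<i> / of_nat p)"

definition chi :: "'a \<Rightarrow> complex" where "chi x = zeta ^ tr_nat R p r x"

lemma zeta_p: "zeta ^ p = 1"
proof -
  have "zeta ^ p = exp (of_nat p * (2 * pi * \<i> / of_nat p))"
    unfolding zeta_def by (rule exp_of_nat_mult[symmetric])
  also have "of_nat p * (2 * pi * \<i> / of_nat p) = 2 * pi * \<i>" using p2 by simp
  finally show ?thesis by simp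
qed

lemma zeta_mod: "zeta ^ n = zeta ^ (n mod p)"
proof -
  have "zeta ^ n = zeta ^ (p * (n div p) + n mod p)" by simp
  also have "\<dots> = (zeta ^ p) ^ (n div p) * zeta ^ (n mod p)" by (simp only: power_add power_mult)
  finally show ?thesis by (simp add: zeta_p)
qed

lemma zeta_ne1: "0 < t \<Longrightarrow> t < p \<Longrightarrow> zeta ^ t \<noteq> 1"
proof
  assume t: "0 < t" "t < p" and z: "zeta ^ t = 1"
  have "zeta ^ t = exp (of_nat t * (2 * pi * \<i> / of_nat p))"
    unfolding zeta_def by (rule exp_of_nat_mult[symmetric])
  then have "Re (exp (of_nat t * (2 * pi * \<i> / of_nat p))) = 1" using z by simp
  then have "cos (real t * (2 * pi) / real p) = 1" by (simp add: Re_exp)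
  then obtain n :: int where n: "real t * (2 * pi) / real p = of_int n * 2 * pi"
    using cos_one_2pi_int by blast
  then have "real t = of_int n * real p" using p2 by (simp add: field_simps)
  then have "int t = n * int p" by (metis of_int_eq_iff of_int_mult of_int_of_nat_eq)
  then show False using t
    by (metis dvd_triv_right int_dvd_int_iff nat_dvd_not_less)
qed

lemma chi_add: "x \<in> carrier R \<Longrightarrow> y \<in> carrier R \<Longrightarrow> chi (x \<oplus> y) = chi x * chi y"
  unfolding chi_def by (simp add: tr_nat_add zeta_mod[symmetric] power_add)

lemma chi_zero: "chi \<zero> = 1"
  unfolding chi_def by (simp add: tr_nat_zero)

lemma chi_sum: "(\<Sum>x\<in>carrier R. chi x) = 0"
proof -
  obtain a where a: "a \<in> carrier R" "Tr a \<noteq> \<zero>" using Tr_nontrivial by blast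
  have ta: "0 < tr_nat R p r a" "tr_nat R p r a < p"
    using tr_nat_spec[OF a(1)] a(2) by (auto intro!: Nat.gr0I)
  have ca: "chi a \<noteq> 1" unfolding chi_def using zeta_ne1[OF ta] .
  have bij: "bij_betw (\<lambda>x. x \<oplus> a) (carrier R) (carrier R)"
  proof (rule bij_betwI[where g="\<lambda>y. y \<ominus> a"])
    show "(\<lambda>x. x \<oplus> a) \<in> carrier R \<rightarrow> carrier R" using a by auto
    show "(\<lambda>y. y \<ominus> a) \<in> carrier R \<rightarrow> carrier R" using a by auto
    show "\<And>x. x \<in> carrier R \<Longrightarrow> x \<oplus> a \<ominus> a = x" using a by (simp add: minus_eq a_assoc r_neg)
    show "\<And>y. y \<in> carrier R \<Longrightarrow> y \<ominus> a \<oplus> a = y" using a by (simp add: minus_eq a_assoc l_neg)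
  qed
  have "(\<Sum>x\<in>carrier R. chi x) = (\<Sum>x\<in>carrier R. chi (x \<oplus> a))"
    using sum.reindex_bij_betw[OF bij, of chi] by simp
  also have "\<dots> = (\<Sum>x\<in>carrier R. chi x) * chi a"
    using a by (simp add: chi_add sum_distrib_right)
  finally have "(\<Sum>x\<in>carrier R. chi x) * (1 - chi a) = 0" by (simp add: algebra_simps)
  then show ?thesis using ca by simp
qed

end

locale gpf = ffield R p r for R (structure) and p r +
  fixes e :: nat and \<beta> :: 'a
  assumes e2: "e \<ge> 2" and qmod: "p ^ r mod e = 1" and gen: "is_generator R \<beta>"
begin

definition N where "N = p ^ r - 1"
definition f where "f = N div e"

lemma pr2: "p ^ r \<ge> 2"
proof -
  have "p ^ 1 \<le> p ^ r" using r1 p2 by (intro power_increasing) auto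
  then show ?thesis using p2 by simp
qed

lemma Npos: "N > 0" unfolding N_def using pr2 by simp

lemma N_ef: "N = e * f"
proof -
  have "p ^ r mod e = 1 mod e" using qmod e2 by simp
  then have "e dvd N" unfolding N_def using pr2 by (subst mod_eq_dvd_iff_nat[symmetric]) auto
  then show ?thesis unfolding f_def by simp
qed

lemma fpos: "f > 0" using Npos N_ef by (metis mult_0_right neq0_conv)

lemma beta_c: "\<beta> \<in> carrier R" "\<beta> \<noteq> \<zero>" using gen unfolding is_generator_def by auto

lemma beta_pow_c [simp]: "\<beta> [^] (n::nat) \<in> carrier R"
  using beta_c by simp

lemma beta_pow_nz [simp]: "\<beta> [^] (n::nat) \<noteq> \<zero>"
  using beta_c pow_eq_zero_D[of \<beta> n] by auto

lemma beta_N: "\<beta> [^] N = \<one>"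
proof -
  have "p ^ r = Suc N" unfolding N_def using Npos N_def by simp
  then have "\<beta> [^] N \<otimes> \<beta> = \<one> \<otimes> \<beta>" using pow_card[OF beta_c(1)] beta_c by simp
  then show ?thesis using beta_c m_rcancel by (metis beta_pow_c one_closed)
qed

lemma beta_mod: "\<beta> [^] n = \<beta> [^] (n mod N)"
proof -
  have "\<beta> [^] n = \<beta> [^] (N * (n div N) + n mod N)" by simp
  also have "\<dots> = (\<beta> [^] N) [^] (n div N) \<otimes> \<beta> [^] (n mod N)"
    using beta_c by (simp only: nat_pow_mult[symmetric] nat_pow_pow) 
  finally show ?thesis by (simp add: beta_N)
qed

lemma beta_ex: "x \<in> carrier R \<Longrightarrow> x \<noteq> \<zero> \<Longrightarrow> \<exists>n. x = \<beta> [^] (n::nat)"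
  using gen unfolding is_generator_def by blast

lemma beta_image: "(\<lambda>n. \<beta> [^] n) ` {..<N} = carrier R - {\<zero>}"
proof
  show "(\<lambda>n. \<beta> [^] n) ` {..<N} \<subseteq> carrier R - {\<zero>}"
  proof (rule image_subsetI)
    fix n :: nat
    have "\<beta> [^] n \<notin> {\<zero>}" using beta_pow_nz[of n] by (simp only: singleton_iff not_False_eq_True)
    then show "\<beta> [^] n \<in> carrier R - {\<zero>}" by (intro DiffI beta_pow_c)
  qed
  show "carrier R - {\<zero>} \<subseteq> (\<lambda>n. \<beta> [^] n) ` {..<N}"
  proof
    fix x assume "x \<in> carrier R - {\<zero>}"
    then have xc: "x \<in> carrier R" "x \<noteq> \<zero>" by auto
    from beta_ex[OF xc] obtain n :: nat where "x = \<beta> [^] n" ..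
    then have "x = \<beta> [^] (n mod N)" using beta_mod[of n] by (rule trans)
    moreover have "n mod N \<in> {..<N}" using Npos by simp
    ultimately show "x \<in> (\<lambda>n. \<beta> [^] n) ` {..<N}" by (rule image_eqI)
  qed
qed

lemma beta_inj: "inj_on (\<lambda>n. \<beta> [^] n) {..<N}"
proof (rule eq_card_imp_inj_on)
  show "finite {..<N}" by simp
  have c1: "card (carrier R - {\<zero>}) = N" unfolding N_def using cardR fin by (simp add: card_Diff_singleton)
  show "card ((\<lambda>n. \<beta> [^] n) ` {..<N}) = card {..<N}" by (simp only: beta_image c1 card_lessThan)
qed

lemma beta_eq: "\<beta> [^] a = \<beta> [^] b \<longleftrightarrow> a mod N = b mod N"
proof
  assume "\<beta> [^] a = \<beta> [^] b"
  then have "\<beta> [^] (a mod N) = \<beta> [^] (b mod N)" using beta_mod[of a] beta_mod[of b] by simp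
  moreover have "a mod N \<in> {..<N}" "b mod N \<in> {..<N}" using Npos by auto
  ultimately show "a mod N = b mod N" using inj_onD[OF beta_inj] by blast
next
  assume "a mod N = b mod N"
  then show "\<beta> [^] a = \<beta> [^] b" using beta_mod[of a] beta_mod[of b] by simp
qed

lemma beta_eq_mod_e: "\<beta> [^] a = \<beta> [^] b \<Longrightarrow> a mod e = b mod e"
proof -
  assume "\<beta> [^] a = \<beta> [^] b"
  then have "a mod N = b mod N" using beta_eq by simp
  then have "a mod N mod e = b mod N mod e" by simp
  moreover have "e dvd N" using N_ef by simp
  ultimately show ?thesis by (simp add: mod_mod_cancel)
qed

definition cr :: "int \<Rightarrow> nat" where "cr a = nat (a mod int e)"

lemma cr_lt: "cr a < e" unfolding cr_def using e2 by (simp add: nat_less_iff)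

lemma int_cr: "int (cr a) = a mod int e" unfolding cr_def using e2 by simp

definition Cl :: "int \<Rightarrow> 'a set" where "Cl a = (\<lambda>j::nat. \<beta> [^] (e * j + cr a)) ` {..<f}"

lemma Cl_inj: "c < e \<Longrightarrow> inj_on (\<lambda>j::nat. \<beta> [^] (e * j + c)) {..<f}"
proof (rule inj_onI)
  fix j j' :: nat assume c: "c < e" and j: "j \<in> {..<f}" "j' \<in> {..<f}"
    and eq: "\<beta> [^] (e * j + c) = \<beta> [^] (e * j' + c)"
  have lt: "e * j + c < N" "e * j' + c < N"
  proof -
    have "e * j + c < e * (j + 1)" "e * j' + c < e * (j' + 1)" using c by simp_all
    moreover have "e * (j + 1) \<le> e * f" "e * (j' + 1) \<le> e * f" using j by (intro mult_le_mono2; simp)+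
    ultimately show "e * j + c < N" "e * j' + c < N" using N_ef by linarith+
  qed
  have "(e * j + c) mod N = (e * j' + c) mod N" using eq beta_eq by blast
  then have "e * j + c = e * j' + c" using lt by simp
  then show "j = j'" using e2 by simp
qed

lemma card_Cl: "card (Cl a) = f"
  unfolding Cl_def using card_image[OF Cl_inj[OF cr_lt]] by simp

lemma finite_Cl: "finite (Cl a)" unfolding Cl_def by simp

lemma Cl_sub: "Cl a \<subseteq> carrier R - {\<zero>}"
  unfolding Cl_def by (auto simp del: beta_pow_nz simp add: beta_pow_nz)

lemma mem_Cl: "\<beta> [^] (n::nat) \<in> Cl a \<longleftrightarrow> int n mod int e = a mod int e"
proof
  assume "\<beta> [^] n \<in> Cl a"
  then obtain j :: nat where "\<beta> [^] n = \<beta> [^] (e * j + cr a)" unfolding Cl_def by blast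
  then have "n mod e = (e * j + cr a) mod e" by (rule beta_eq_mod_e)
  also have "\<dots> = cr a" using cr_lt by simp
  finally have "int (n mod e) = a mod int e" using int_cr by simp
  then show "int n mod int e = a mod int e" by (simp add: of_nat_mod)
next
  assume H: "int n mod int e = a mod int e"
  define m where "m = n mod N"
  have eqb: "\<beta> [^] n = \<beta> [^] m" unfolding m_def by (rule beta_mod)
  have "m mod e = n mod e" unfolding m_def using N_ef by (simp add: mod_mod_cancel)
  also have "int (n mod e) = a mod int e" using H by (simp add: of_nat_mod)
  then have "n mod e = cr a" using int_cr by (metis of_nat_eq_iff)
  finally have mm: "m mod e = cr a" .
  have "m < e * f" unfolding m_def using Npos N_ef by (metis mod_less_divisor)
  then have md: "m div e < f" using e2 by (simp add: div_less_iff_less_mult mult.commute)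
  have "m = e * (m div e) + cr a" using mm mult_div_mod_eq[of e m] by simp
  then have "\<beta> [^] n = \<beta> [^] (e * (m div e) + cr a)" using eqb by simp
  then show "\<beta> [^] n \<in> Cl a" unfolding Cl_def using md by blast
qed

lemma Cl_elem: "x \<in> Cl a \<Longrightarrow> \<exists>n::nat. x = \<beta> [^] n \<and> int n mod int e = a mod int e"
proof -
  assume x: "x \<in> Cl a"
  then obtain j :: nat where "x = \<beta> [^] (e * j + cr a)" unfolding Cl_def by blast
  then show ?thesis using x mem_Cl by blast
qed

lemma Cl_mult: "x \<in> Cl a \<Longrightarrow> u \<in> Cl b \<Longrightarrow> x \<otimes> u \<in> Cl (a + b)"
proof -
  assume "x \<in> Cl a" "u \<in> Cl b"
  then obtain n m :: nat where nm: "x = \<beta> [^] n" "int n mod int e = a mod int e"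
    "u = \<beta> [^] m" "int m mod int e = b mod int e" using Cl_elem by metis
  have "x \<otimes> u = \<beta> [^] (n + m)" using nm beta_c by (simp add: nat_pow_mult)
  moreover have "int (n + m) mod int e = (a + b) mod int e"
    using nm by (metis of_nat_add mod_add_eq)
  ultimately show ?thesis using mem_Cl by simp
qed

lemma Cl_bij: "x \<in> Cl a \<Longrightarrow> bij_betw (\<lambda>u. x \<otimes> u) (Cl b) (Cl (a + b))"
proof -
  assume x: "x \<in> Cl a"
  then have xc: "x \<in> carrier R" "x \<noteq> \<zero>" using Cl_sub by auto
  have inj: "inj_on (\<lambda>u. x \<otimes> u) (Cl b)"
  proof (rule inj_onI)
    fix u v assume "u \<in> Cl b" "v \<in> Cl b" "x \<otimes> u = x \<otimes> v"
    then show "u = v" using xc Cl_sub m_lcancel by blast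
  qed
  have sub: "(\<lambda>u. x \<otimes> u) ` Cl b \<subseteq> Cl (a + b)" using Cl_mult[OF x] by auto
  have "card ((\<lambda>u. x \<otimes> u) ` Cl b) = card (Cl (a + b))"
    using card_image[OF inj] card_Cl by simp
  then have "(\<lambda>u. x \<otimes> u) ` Cl b = Cl (a + b)"
    using sub finite_Cl card_subset_eq by blast
  then show ?thesis using inj unfolding bij_betw_def by blast
qed

lemma gp_Cl: "gauss_period R p r e \<beta> a = (\<Sum>x\<in>Cl a. chi x)"
proof -
  have "(\<Sum>x\<in>Cl a. chi x) = (\<Sum>j<f. chi (\<beta> [^] (e * j + cr a)))"
    unfolding Cl_def by (subst sum.reindex[OF Cl_inj[OF cr_lt]]) simp
  also have "\<dots> = gauss_period R p r e \<beta> a"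
    unfolding gauss_period_def chi_def zeta_def f_def N_def cr_def by simp
  finally show ?thesis by simp
qed

lemma Cl_disj: "k \<in> {0..<int e} \<Longrightarrow> k' \<in> {0..<int e} \<Longrightarrow> k \<noteq> k' \<Longrightarrow> Cl k \<inter> Cl k' = {}"
proof (rule ccontr)
  assume k: "k \<in> {0..<int e}" "k' \<in> {0..<int e}" "k \<noteq> k'" and "Cl k \<inter> Cl k' \<noteq> {}"
  then obtain x where x: "x \<in> Cl k" "x \<in> Cl k'" by blast
  from Cl_elem[OF x(1)] obtain n :: nat where n: "x = \<beta> [^] n" "int n mod int e = k mod int e" by blast
  have "int n mod int e = k' mod int e" using x(2) n(1) mem_Cl by blast
  then have "k mod int e = k' mod int e" using n by simp
  then show False using k by simp
qed

lemma Cl_union: "(\<Union>k\<in>{0..<int e}. Cl k) = carrier R - {\<zero>}"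
proof
  show "(\<Union>k\<in>{0..<int e}. Cl k) \<subseteq> carrier R - {\<zero>}" using Cl_sub by blast
  show "carrier R - {\<zero>} \<subseteq> (\<Union>k\<in>{0..<int e}. Cl k)"
  proof
    fix x assume "x \<in> carrier R - {\<zero>}"
    then have xc: "x \<in> carrier R" "x \<noteq> \<zero>" by auto
    from beta_ex[OF xc] obtain n :: nat where n: "x = \<beta> [^] n" ..
    have "x \<in> Cl (int n mod int e)" using n mem_Cl by simp
    moreover have "int n mod int e \<in> {0..<int e}" using e2 by simp
    ultimately show "x \<in> (\<Union>k\<in>{0..<int e}. Cl k)" by blast
  qed
qed

lemma sum_gp: "(\<Sum>k\<in>{0..<int e}. gauss_period R p r e \<beta> k) = -1"
proof -
  have "(\<Sum>k\<in>{0..<int e}. gauss_period R p r e \<beta> k) = (\<Sum>k\<in>{0..<int e}. \<Sum>x\<in>Cl k. chi x)"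
    by (simp add: gp_Cl)
  also have "\<dots> = (\<Sum>x\<in>(\<Union>k\<in>{0..<int e}. Cl k). chi x)"
    by (rule sum.UNION_disjoint[symmetric]) (auto simp: finite_Cl dest: Cl_disj)
  also have "\<dots> = (\<Sum>x\<in>carrier R - {\<zero>}. chi x)" by (simp only: Cl_union)
  also have "\<dots> = (\<Sum>x\<in>carrier R. chi x) - chi \<zero>"
    using fin by (simp add: sum_diff1)
  also have "\<dots> = -1" using chi_sum chi_zero by simp
  finally show ?thesis .
qed

lemma cyc_eq: "cyc R p r e \<beta> a b = card {u \<in> Cl a. \<one> \<oplus> u \<in> Cl b}"
proof -
  define S where "S = {(v1, v2). v1 < f \<and> v2 < f \<and>
      \<one> \<oplus> \<beta> [^] (e * v1 + cr a) = \<beta> [^] (e * v2 + cr b)}"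
  have cS: "cyc R p r e \<beta> a b = card S"
    unfolding cyc_def S_def f_def N_def cr_def by simp
  have bij: "bij_betw (\<lambda>(v1, v2). \<beta> [^] (e * v1 + cr a)) S {u \<in> Cl a. \<one> \<oplus> u \<in> Cl b}"
    unfolding bij_betw_def
  proof
    show "inj_on (\<lambda>(v1, v2). \<beta> [^] (e * v1 + cr a)) S"
    proof (rule inj_onI, clarify)
      fix v1 v2 w1 w2 assume A: "(v1, v2) \<in> S" "(w1, w2) \<in> S"
        and eq: "\<beta> [^] (e * v1 + cr a) = \<beta> [^] (e * w1 + cr a)"
      have v1: "v1 = w1" using inj_onD[OF Cl_inj[OF cr_lt[of a]] eq] A unfolding S_def by auto
      then have "\<beta> [^] (e * v2 + cr b) = \<beta> [^] (e * w2 + cr b)" using A unfolding S_def by auto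
      then have "v2 = w2" using inj_onD[OF Cl_inj[OF cr_lt[of b]]] A unfolding S_def by auto
      then show "v1 = w1 \<and> v2 = w2" using v1 by simp
    qed
    show "(\<lambda>(v1, v2). \<beta> [^] (e * v1 + cr a)) ` S = {u \<in> Cl a. \<one> \<oplus> u \<in> Cl b}"
    proof
      show "(\<lambda>(v1, v2). \<beta> [^] (e * v1 + cr a)) ` S \<subseteq> {u \<in> Cl a. \<one> \<oplus> u \<in> Cl b}"
      proof (rule image_subsetI)
        fix v assume "v \<in> S"
        then obtain v1 v2 :: nat where v: "v = (v1, v2)" "v1 < f" "v2 < f"
          "\<one> \<oplus> \<beta> [^] (e * v1 + cr a) = \<beta> [^] (e * v2 + cr b)" unfolding S_def by blast
        have "\<beta> [^] (e * v1 + cr a) \<in> Cl a" unfolding Cl_def by (intro image_eqI[OF refl]) (simp add: v(2))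
        moreover have "\<beta> [^] (e * v2 + cr b) \<in> Cl b" unfolding Cl_def by (intro image_eqI[OF refl]) (simp add: v(3))
        ultimately show "(\<lambda>(v1, v2). \<beta> [^] (e * v1 + cr a)) v \<in> {u \<in> Cl a. \<one> \<oplus> u \<in> Cl b}"
          using v by simp
      qed
      show "{u \<in> Cl a. \<one> \<oplus> u \<in> Cl b} \<subseteq> (\<lambda>(v1, v2). \<beta> [^] (e * v1 + cr a)) ` S"
      proof
        fix u assume u: "u \<in> {u \<in> Cl a. \<one> \<oplus> u \<in> Cl b}"
        then obtain v1 :: nat where v1: "v1 < f" "u = \<beta> [^] (e * v1 + cr a)" unfolding Cl_def by auto
        obtain v2 :: nat where v2: "v2 < f" "\<one> \<oplus> u = \<beta> [^] (e * v2 + cr b)" using u unfolding Cl_def by auto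
        have "(v1, v2) \<in> S" unfolding S_def using v1 v2 by simp
        then show "u \<in> (\<lambda>(v1, v2). \<beta> [^] (e * v1 + cr a)) ` S" using v1 by force
      qed
    qed
  qed
  show ?thesis using cS bij_betw_same_card[OF bij] by simp
qed

lemma D_eq: "D_ind R p r e \<beta> a = (if \<ominus> \<one> \<in> Cl a then 1 else 0)"
proof -
  have "(\<exists>x\<in>carrier R - {\<zero>}. \<ominus> \<one> = \<beta> [^] cr a \<otimes> x [^] e) \<longleftrightarrow> \<ominus> \<one> \<in> Cl a"
  proof
    assume "\<exists>x\<in>carrier R - {\<zero>}. \<ominus> \<one> = \<beta> [^] cr a \<otimes> x [^] e"
    then obtain x where x: "x \<in> carrier R" "x \<noteq> \<zero>" "\<ominus> \<one> = \<beta> [^] cr a \<otimes> x [^] e" by blast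
    from beta_ex[OF x(1,2)] obtain n :: nat where n: "x = \<beta> [^] n" ..
    have "\<ominus> \<one> = \<beta> [^] (cr a + n * e)"
      using x(3) n by (simp only: nat_pow_pow[OF beta_c(1)] nat_pow_mult[OF beta_c(1)])
    moreover have "int (cr a + n * e) mod int e = a mod int e"
    proof -
      have "int (cr a + n * e) = a mod int e + int n * int e" using int_cr[of a] by simp
      then show ?thesis by simp
    qed
    ultimately show "\<ominus> \<one> \<in> Cl a" using mem_Cl by simp
  next
    assume "\<ominus> \<one> \<in> Cl a"
    then obtain j :: nat where j: "\<ominus> \<one> = \<beta> [^] (e * j + cr a)" unfolding Cl_def by blast
    have "\<beta> [^] cr a \<otimes> (\<beta> [^] j) [^] e = \<beta> [^] (cr a + j * e)"
      by (simp only: nat_pow_pow[OF beta_c(1)] nat_pow_mult[OF beta_c(1)])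
    moreover have "cr a + j * e = e * j + cr a" by simp
    ultimately have "\<beta> [^] (e * j + cr a) = \<beta> [^] cr a \<otimes> (\<beta> [^] j) [^] e" by simp
    moreover have "\<beta> [^] j \<in> carrier R - {\<zero>}" by simp
    ultimately show "\<exists>x\<in>carrier R - {\<zero>}. \<ominus> \<one> = \<beta> [^] cr a \<otimes> x [^] e" using j by metis
  qed
  then show ?thesis unfolding D_ind_def cr_def by simp
qed

abbreviation eta where "eta \<equiv> gauss_period R p r e \<beta>"

lemma gp_mod: "eta (x mod int e) = eta x"
  unfolding gauss_period_def by simp

definition lg :: "'a \<Rightarrow> nat" where "lg w = (SOME n. w = \<beta> [^] n)"

lemma lg: "w \<in> carrier R \<Longrightarrow> w \<noteq> \<zero> \<Longrightarrow> w = \<beta> [^] lg w"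
  unfolding lg_def using beta_ex by (rule someI_ex) 

lemma lg_Cl: "w \<in> carrier R \<Longrightarrow> w \<noteq> \<zero> \<Longrightarrow> w \<in> Cl (int (lg w))"
  using lg mem_Cl by metis

lemma Cl_carrier: "x \<in> Cl a \<Longrightarrow> x \<in> carrier R" using Cl_sub by blast

lemma inner_sum:
  assumes w: "w \<in> carrier R" "w \<noteq> \<zero>"
  shows "(\<Sum>x\<in>Cl i. chi (x \<otimes> w)) = eta (int (lg w) + i)"
proof -
  have b: "bij_betw (\<lambda>x. w \<otimes> x) (Cl i) (Cl (int (lg w) + i))"
    by (rule Cl_bij[OF lg_Cl[OF w]])
  have "(\<Sum>x\<in>Cl i. chi (x \<otimes> w)) = (\<Sum>x\<in>Cl i. chi (w \<otimes> x))"
    using w by (intro sum.cong refl) (simp add: m_comm Cl_carrier)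
  also have "\<dots> = (\<Sum>z\<in>Cl (int (lg w) + i). chi z)"
    by (rule sum.reindex_bij_betw[OF b])
  finally show ?thesis by (simp add: gp_Cl)
qed

definition hh :: "int \<Rightarrow> 'a \<Rightarrow> complex" where
  "hh i u = (if \<one> \<oplus> u = \<zero> then of_nat f else eta (int (lg (\<one> \<oplus> u)) + i))"

lemma lhs_eq: "eta i * eta j = (\<Sum>u\<in>Cl (j - i). hh i u)"
proof -
  have "eta i * eta j = (\<Sum>x\<in>Cl i. \<Sum>y\<in>Cl j. chi x * chi y)"
    by (simp add: gp_Cl sum_product)
  also have "\<dots> = (\<Sum>x\<in>Cl i. \<Sum>y\<in>Cl j. chi (x \<oplus> y))"
    by (intro sum.cong refl) (simp add: chi_add Cl_carrier)
  also have "\<dots> = (\<Sum>x\<in>Cl i. \<Sum>u\<in>Cl (j - i). chi (x \<oplus> x \<otimes> u))"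
  proof (rule sum.cong[OF refl])
    fix x assume x: "x \<in> Cl i"
    have b: "bij_betw (\<lambda>u. x \<otimes> u) (Cl (j - i)) (Cl j)"
      using Cl_bij[OF x, of "j - i"] by simp
    show "(\<Sum>y\<in>Cl j. chi (x \<oplus> y)) = (\<Sum>u\<in>Cl (j - i). chi (x \<oplus> x \<otimes> u))"
      by (rule sum.reindex_bij_betw[OF b, symmetric])
  qed
  also have "\<dots> = (\<Sum>u\<in>Cl (j - i). \<Sum>x\<in>Cl i. chi (x \<otimes> (\<one> \<oplus> u)))"
    by (subst sum.swap) (intro sum.cong refl, simp add: r_distr Cl_carrier)
  also have "\<dots> = (\<Sum>u\<in>Cl (j - i). hh i u)"
  proof (rule sum.cong[OF refl])
    fix u assume u: "u \<in> Cl (j - i)"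
    have uc: "u \<in> carrier R" using u by (rule Cl_carrier)
    show "(\<Sum>x\<in>Cl i. chi (x \<otimes> (\<one> \<oplus> u))) = hh i u"
    proof (cases "\<one> \<oplus> u = \<zero>")
      case True
      have "(\<Sum>x\<in>Cl i. chi (x \<otimes> (\<one> \<oplus> u))) = (\<Sum>x\<in>Cl i. 1)"
        using True by (intro sum.cong refl) (simp add: Cl_carrier chi_zero)
      also have "\<dots> = of_nat f" by (simp add: card_Cl)
      finally show ?thesis using True unfolding hh_def by simp
    next
      case False
      then show ?thesis unfolding hh_def using inner_sum[of "\<one> \<oplus> u" i] uc by simp
    qed
  qed
  finally show ?thesis .
qed

lemma card_sum: "finite A \<Longrightarrow> of_nat (card {u \<in> A. P u}) * (c::complex) = (\<Sum>u\<in>A. if P u then c else 0)"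
  by (simp add: sum.inter_filter[symmetric])

lemma rhs_inner:
  assumes u: "u \<in> carrier R"
  shows "(\<Sum>k\<in>{0..<int e}. if \<one> \<oplus> u \<in> Cl (k - i) then eta k else 0) =
    (if \<one> \<oplus> u = \<zero> then 0 else eta (int (lg (\<one> \<oplus> u)) + i))"
proof (cases "\<one> \<oplus> u = \<zero>")
  case True
  then have "\<And>k. \<one> \<oplus> u \<notin> Cl (k - i)" using Cl_sub by blast
  then show ?thesis using True by simp
next
  case False
  define w where "w = \<one> \<oplus> u"
  have wc: "w \<in> carrier R" "w \<noteq> \<zero>" using u False unfolding w_def by auto
  define k0 where "k0 = (int (lg w) + i) mod int e"
  have "(\<Sum>k\<in>{0..<int e}. if w \<in> Cl (k - i) then eta k else 0) =
        (\<Sum>k\<in>{0..<int e}. if k = k0 then eta k else 0)"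
  proof (intro sum.cong refl)
    fix k assume k: "k \<in> {0..<int e}"
    have "w \<in> Cl (k - i) \<longleftrightarrow> int (lg w) mod int e = (k - i) mod int e"
      using lg[OF wc] mem_Cl by metis
    also have "\<dots> \<longleftrightarrow> k = k0"
    proof
      assume "int (lg w) mod int e = (k - i) mod int e"
      then have "(int (lg w) + i) mod int e = (k - i + i) mod int e" by (metis mod_add_left_eq)
      then show "k = k0" unfolding k0_def using k by simp
    next
      assume "k = k0"
      then have "k mod int e = (int (lg w) + i) mod int e" unfolding k0_def by simp
      then have "(k - i) mod int e = (int (lg w) + i - i) mod int e" by (metis mod_diff_left_eq)
      then show "int (lg w) mod int e = (k - i) mod int e" by simp
    qed
    finally show "(if w \<in> Cl (k - i) then eta k else 0) = (if k = k0 then eta k else 0)" by simp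
  qed
  also have "\<dots> = eta k0"
    using e2 unfolding k0_def by (simp add: sum.delta)
  also have "\<dots> = eta (int (lg w) + i)" unfolding k0_def by (rule gp_mod)
  finally show ?thesis using False unfolding w_def by simp
qed

lemma D_sum: "of_int (D_ind R p r e \<beta> a) * of_nat f = (\<Sum>u\<in>Cl a. if \<one> \<oplus> u = \<zero> then (of_nat f :: complex) else 0)"
proof -
  have "(\<Sum>u\<in>Cl a. if \<one> \<oplus> u = \<zero> then (of_nat f :: complex) else 0) =
        (\<Sum>u\<in>Cl a. if u = \<ominus> \<one> then of_nat f else 0)"
  proof (intro sum.cong refl)
    fix u assume "u \<in> Cl a"
    then have uc: "u \<in> carrier R" by (rule Cl_carrier)
    have "\<one> \<oplus> u = \<zero> \<longleftrightarrow> u = \<ominus> \<one>"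
    proof
      assume "\<one> \<oplus> u = \<zero>"
      then have "u \<oplus> \<one> = \<zero>" using uc by (simp add: a_comm)
      then show "u = \<ominus> \<one>" using uc by (metis minus_equality one_closed)
    next
      assume "u = \<ominus> \<one>"
      then show "\<one> \<oplus> u = \<zero>" by (simp add: r_neg)
    qed
    then show "(if \<one> \<oplus> u = \<zero> then (of_nat f :: complex) else 0) = (if u = \<ominus> \<one> then of_nat f else 0)"
      by simp
  qed
  also have "\<dots> = (if \<ominus> \<one> \<in> Cl a then of_nat f else 0)"
    using finite_Cl by (simp add: sum.delta)
  finally show ?thesis by (simp add: D_eq)
qed

lemma gp_mult: "eta i * eta j =
  (\<Sum>k\<in>{0..<int e}. of_int (mult_matrix R p r e \<beta> (j - i) (k - i)) * eta k)"
proof -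
  let ?A = "Cl (j - i)"
  have "(\<Sum>k\<in>{0..<int e}. of_int (mult_matrix R p r e \<beta> (j - i) (k - i)) * eta k) =
     (\<Sum>k\<in>{0..<int e}. of_nat (cyc R p r e \<beta> (j - i) (k - i)) * eta k) -
     of_int (D_ind R p r e \<beta> (j - i)) * of_nat f * (\<Sum>k\<in>{0..<int e}. eta k)"
    unfolding mult_matrix_def f_def N_def
    by (simp add: sum_subtractf sum_distrib_left algebra_simps)
  also have "(\<Sum>k\<in>{0..<int e}. eta k) = -1" by (rule sum_gp)
  also have "(\<Sum>k\<in>{0..<int e}. of_nat (cyc R p r e \<beta> (j - i) (k - i)) * eta k) =
      (\<Sum>k\<in>{0..<int e}. \<Sum>u\<in>?A. if \<one> \<oplus> u \<in> Cl (k - i) then eta k else 0)"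
    by (intro sum.cong refl) (simp add: cyc_eq card_sum finite_Cl)
  also have "\<dots> = (\<Sum>u\<in>?A. \<Sum>k\<in>{0..<int e}. if \<one> \<oplus> u \<in> Cl (k - i) then eta k else 0)"
    by (rule sum.swap)
  also have "\<dots> = (\<Sum>u\<in>?A. if \<one> \<oplus> u = \<zero> then 0 else eta (int (lg (\<one> \<oplus> u)) + i))"
    by (intro sum.cong refl) (simp add: rhs_inner Cl_carrier)
  also have "of_int (D_ind R p r e \<beta> (j - i)) * of_nat f =
      (\<Sum>u\<in>?A. if \<one> \<oplus> u = \<zero> then (of_nat f :: complex) else 0)"
    by (rule D_sum)
  finally have "(\<Sum>k\<in>{0..<int e}. of_int (mult_matrix R p r e \<beta> (j - i) (k - i)) * eta k) =
     (\<Sum>u\<in>?A. if \<one> \<oplus> u = \<zero> then 0 else eta (int (lg (\<one> \<oplus> u)) + i)) +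
     (\<Sum>u\<in>?A. if \<one> \<oplus> u = \<zero> then (of_nat f :: complex) else 0)" by simp
  also have "\<dots> = (\<Sum>u\<in>?A. hh i u)"
    unfolding hh_def sum.distrib[symmetric] by (intro sum.cong refl) simp
  finally show ?thesis using lhs_eq by simp
qed

lemma mm_mod: "mult_matrix R p r e \<beta> (x mod int e) (y mod int e) = mult_matrix R p r e \<beta> x y"
  unfolding mult_matrix_def cyc_def D_ind_def by simp

end

theorem mainTheorem8:
  fixes R :: "('a,'b) ring_scheme" and R' :: "('c,'d) ring_scheme"
    and e p r q s :: nat and \<beta> :: 'a and \<beta>' :: 'c and d i j :: int
  assumes "e \<ge> 2"
    and "field R" "finite (carrier R)" "Factorial_Ring.prime p" "r \<ge> 1" "card (carrier R) = p ^ r"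
    and "p ^ r mod e = 1" "is_generator R \<beta>"
    and "field R'" "finite (carrier R')" "Factorial_Ring.prime q" "s \<ge> 1" "card (carrier R') = q ^ s"
    and "q ^ s mod e = 1" "is_generator R' \<beta>'"
    and "\<not> int e dvd d"
  shows "dconv e d (gauss_period R p r e \<beta>) (gauss_period R' q s e \<beta>') i *
         dconv e d (gauss_period R p r e \<beta>) (gauss_period R' q s e \<beta>') j =
         (\<Sum>k \<in> {0..<int e}.
            of_int (dconv_mat e d (mult_matrix R p r e \<beta>) (mult_matrix R' q s e \<beta>') (j - i) (k - i)) *
            dconv e d (gauss_period R p r e \<beta>) (gauss_period R' q s e \<beta>') k)"
proof -
  have G1: "gpf R p r e \<beta>"
    unfolding gpf_def gpf_axioms_def ffield_def ffield_axioms_def using assms by auto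
  have G2: "gpf R' q s e \<beta>'"
    unfolding gpf_def gpf_axioms_def ffield_def ffield_axioms_def using assms by auto
  interpret A: gpf R p r e \<beta> by (rule G1)
  interpret B: gpf R' q s e \<beta>' by (rule G2)
  have e0: "e > 0" using assms(1) by simp
  show ?thesis
    by (rule dconv_identity[OF e0 A.gp_mod B.gp_mod A.mm_mod B.mm_mod A.gp_mult B.gp_mult])
qed

end
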